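(* Let $M=P+\varepsilon D\in\mathbb{DH}[t]$ be a monic polynomial and let $N\in\mathbb{D}[t]$ be a monic polynomial of degree two which divides the norm polynomial $M\overline{M}$ in $\mathbb{D}[t]$, and suppose that the primal part of $N$ (a real polynomial) does not divide $P$ in $\mathbb{H}[t]$. Then there exists a unique $h\in\mathbb{DH}$ such that $t-h$ is a right factor of $M$ (i.e. $M=Q(t-h)$ for some $Q\in\mathbb{DH}[t]$) and $(t-h)(t-\overline{h})=N$.
   Context: $\mathbb{D}=\mathbb{R}[\varepsilon]/\langle\varepsilon^2\rangle$ denotes the dual numbers. $\mathbb{H}$ denotes the real quaternions with basis $1,\mathbf{i},\mathbf{j},\mathbf{k}$, $\mathbf{i}^2=\mathbf{j}^2=\mathbf{k}^2=\mathbf{i}\mathbf{j}\mathbf{k}=-1$. The dual quaternions $\mathbb{DH}$ are the $\mathbb{D}$-algebra $\mathbb{H}\otimes_{\mathbb{R}}\mathbb{D}$ ($\varepsilon$ commutes with $\mathbf{i},\mathbf{j},\mathbf{k}$); every $q\in\mathbb{DH}$ is $q=p+\varepsilon d$ with $p,d\in\mathbb{H}$ (primal and dual part). The conjugate of $q=q_0+q_1\mathbf{i}+q_2\mathbf{j}+q_3\mathbf{k}$ ($q_i\in\mathbb{D}$) is $\overline{q}=q_0-q_1\mathbf{i}-q_2\mathbf{j}-q_3\mathbf{k}$. $\mathbb{DH}[t]$ is the ring of polynomials with dual quaternion coefficients in which the indeterminate $t$ commutes with all coefficients. For $M=\sum m_it^i$, $\overline{M}=\sum\overline{m_i}t^i$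 and the norm polynomial is $M\overline{M}=\overline{M}M\in\mathbb{D}[t]$. Every $M\in\mathbb{DH}[t]$ is written $M=P+\varepsilon D$ with $P,D\in\mathbb{H}[t]$ (primal and dual part). Monic means leading coefficient $1$. *)

theory Defs
  imports "HOL-Computational_Algebra.Polynomial"
begin

datatype quat = Quat (qre: real) (qi: real) (qj: real) (qk: real)

lemma quat_eq_iff: "x = y \<longleftrightarrow> qre x = qre y \<and> qi x = qi y \<and> qj x = qj y \<and> qk x = qk y"
  by (cases x; cases y) auto

instantiation quat :: ring_1
begin
definition "0 = Quat 0 0 0 0"
definition "1 = Quat 1 0 0 0"
definition "x + y = Quat (qre x + qre y) (qi x + qi y) (qj x + qj y) (qk x + qk y)"
definition "x - y = Quat (qre x - qre y) (qi x - qi y) (qj x - qj y) (qk x - qk y)"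
definition "- x = Quat (- qre x) (- qi x) (- qj x) (- qk x)"
definition "x * y = Quat
   (qre x * qre y - qi x * qi y - qj x * qj y - qk x * qk y)
   (qre x * qi y + qi x * qre y + qj x * qk y - qk x * qj y)
   (qre x * qj y - qi x * qk y + qj x * qre y + qk x * qi y)
   (qre x * qk y + qi x * qj y - qj x * qi y + qk x * qre y)"
instance
  by standard (simp_all add: quat_eq_iff zero_quat_def one_quat_def plus_quat_def
      minus_quat_def uminus_quat_def times_quat_def algebra_simps)
end

definition qcnj :: "quat \<Rightarrow> quat" where
  "qcnj x = Quat (qre x) (- qi x) (- qj x) (- qk x)"

definition quat_of_real :: "real \<Rightarrow> quat" where
  "quat_of_real a = Quat a 0 0 0"

datatype dual = Dual (dre: real) (deps: real)

lemma dual_eq_iff: "x = y \<longleftrightarrow> dre x = dre y \<and> deps x = deps y"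
  by (cases x; cases y) auto

instantiation dual :: comm_ring_1
begin
definition "0 = Dual 0 0"
definition "1 = Dual 1 0"
definition "x + y = Dual (dre x + dre y) (deps x + deps y)"
definition "x - y = Dual (dre x - dre y) (deps x - deps y)"
definition "- x = Dual (- dre x) (- deps x)"
definition "x * y = Dual (dre x * dre y) (dre x * deps y + deps x * dre y)"
instance
  by standard (simp_all add: dual_eq_iff zero_dual_def one_dual_def plus_dual_def
      minus_dual_def uminus_dual_def times_dual_def algebra_simps)
end

datatype dquat = DQ (primal: quat) (dualpart: quat)

lemma dquat_eq_iff: "x = y \<longleftrightarrow> primal x = primal y \<and> dualpart x = dualpart y"
  by (cases x; cases y) auto

instantiation dquat :: ring_1
begin
definition "0 = DQ 0 0"
definition "1 = DQ 1 0"
definition "x + y = DQ (primal x + primal y) (dualpart x + dualpart y)"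
definition "x - y = DQ (primal x - primal y) (dualpart x - dualpart y)"
definition "- x = DQ (- primal x) (- dualpart x)"
definition "x * y = DQ (primal x * primal y) (primal x * dualpart y + dualpart x * primal y)"
instance
  by standard (simp_all add: dquat_eq_iff zero_dquat_def one_dquat_def plus_dquat_def
      minus_dquat_def uminus_dquat_def times_dquat_def algebra_simps)
end

definition dcnj :: "dquat \<Rightarrow> dquat" where
  "dcnj x = DQ (qcnj (primal x)) (qcnj (dualpart x))"

definition dquat_of_dual :: "dual \<Rightarrow> dquat" where
  "dquat_of_dual z = DQ (quat_of_real (dre z)) (quat_of_real (deps z))"

definition dq_scalar :: "dquat \<Rightarrow> dual" where
  "dq_scalar x = Dual (qre (primal x)) (qre (dualpart x))"

text \<open>The library's polynomial multiplication needs commutative coefficients;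
  we define the product with the indeterminate commuting with all coefficients
  (Cauchy product, coefficient order preserved).\<close>
definition pmul :: "'a::ring_1 poly \<Rightarrow> 'a poly \<Rightarrow> 'a poly" where
  "pmul p q = (\<Sum>i\<le>degree p. \<Sum>j\<le>degree q. monom (coeff p i * coeff q j) (i + j))"

definition pconj :: "dquat poly \<Rightarrow> dquat poly" where
  "pconj M = map_poly dcnj M"

text \<open>Norm polynomial \<open>M * conj M\<close>, which lies in \<open>\<DD>[t]\<close>; we read off its
  (dual-number) coefficients.\<close>
definition norm_poly :: "dquat poly \<Rightarrow> dual poly" where
  "norm_poly M = map_poly dq_scalar (pmul M (pconj M))"

definition primal_poly :: "dquat poly \<Rightarrow> quat poly" where
  "primal_poly M = map_poly primal M"

definition dual_primal_poly :: "dual poly \<Rightarrow> real poly" where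
  "dual_primal_poly N = map_poly dre N"

end

theory Submission
  imports Defs "HOL-Computational_Algebra.Formal_Power_Series"
begin

lemma quat_sel_0[simp]: "qre (0::quat) = 0" "qi (0::quat) = 0" "qj (0::quat) = 0" "qk (0::quat) = 0"
  by (simp_all add: zero_quat_def)
lemma quat_sel_1[simp]: "qre (1::quat) = 1" "qi (1::quat) = 0" "qj (1::quat) = 0" "qk (1::quat) = 0"
  by (simp_all add: one_quat_def)
lemma Quat_0: "Quat 0 0 0 0 = 0" by (simp add: zero_quat_def)

lemma dcnj_mult: "dcnj (x * y) = dcnj y * dcnj x"
  by (simp add: dquat_eq_iff quat_eq_iff dcnj_def qcnj_def times_dquat_def times_quat_def plus_quat_def algebra_simps)
lemma dcnj_add: "dcnj (x + y) = dcnj x + dcnj y"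
  by (simp add: dquat_eq_iff quat_eq_iff dcnj_def qcnj_def plus_dquat_def plus_quat_def)
lemma dcnj_diff: "dcnj (x - y) = dcnj x - dcnj y"
  by (simp add: dquat_eq_iff quat_eq_iff dcnj_def qcnj_def minus_dquat_def minus_quat_def)
lemma dcnj_uminus: "dcnj (- x) = - dcnj x"
  by (simp add: dquat_eq_iff quat_eq_iff dcnj_def qcnj_def uminus_dquat_def uminus_quat_def)
lemma dcnj_0[simp]: "dcnj 0 = 0"
  by (simp add: dquat_eq_iff quat_eq_iff dcnj_def qcnj_def zero_dquat_def)
lemma dcnj_1[simp]: "dcnj 1 = 1"
  by (simp add: dquat_eq_iff quat_eq_iff dcnj_def qcnj_def one_dquat_def one_quat_def)
lemma dcnj_dcnj[simp]: "dcnj (dcnj x) = x"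
  by (simp add: dquat_eq_iff quat_eq_iff dcnj_def qcnj_def)
lemma dcnj_sum: "dcnj (sum f A) = (\<Sum>a\<in>A. dcnj (f a))"
  by (induction A rule: infinite_finite_induct) (auto simp: dcnj_add)

lemma primal_mult: "primal (x * y) = primal x * primal y" by (simp add: times_dquat_def)
lemma primal_add: "primal (x + y) = primal x + primal y" by (simp add: plus_dquat_def)
lemma primal_diff: "primal (x - y) = primal x - primal y" by (simp add: minus_dquat_def)
lemma primal_0[simp]: "primal 0 = 0" by (simp add: zero_dquat_def)
lemma primal_1[simp]: "primal 1 = 1" by (simp add: one_dquat_def)
lemma primal_sum: "primal (sum f A) = (\<Sum>a\<in>A. primal (f a))"
  by (induction A rule: infinite_finite_induct) (auto simp: primal_add)

definition dscal :: "dquat \<Rightarrow> bool" where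
  "dscal x \<longleftrightarrow> qi (primal x) = 0 \<and> qj (primal x) = 0 \<and> qk (primal x) = 0
     \<and> qi (dualpart x) = 0 \<and> qj (dualpart x) = 0 \<and> qk (dualpart x) = 0"

lemma dscal_commute: "dscal x \<Longrightarrow> x * y = y * x"
  by (simp add: dscal_def dquat_eq_iff quat_eq_iff times_dquat_def times_quat_def plus_quat_def algebra_simps)

lemma dscal_of_dual: "dscal (dquat_of_dual z)"
  by (simp add: dscal_def dquat_of_dual_def quat_of_real_def)
lemma dscal_norm: "dscal (x * dcnj x)"
  by (simp add: dscal_def dcnj_def qcnj_def times_dquat_def times_quat_def plus_quat_def algebra_simps)
lemma dscal_trace: "dscal (x + dcnj x)"
  by (simp add: dscal_def dcnj_def qcnj_def plus_dquat_def plus_quat_def)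
lemma dscal_dcnj: "dscal x \<Longrightarrow> dcnj x = x"
  by (simp add: dscal_def dcnj_def qcnj_def dquat_eq_iff quat_eq_iff)
lemma dcnj_fix_dscal: "dcnj x = x \<Longrightarrow> dscal x"
  by (simp add: dscal_def dcnj_def qcnj_def dquat_eq_iff quat_eq_iff)
lemma dscal_dual_scalar: "dscal x \<Longrightarrow> dquat_of_dual (dq_scalar x) = x"
  by (simp add: dscal_def dquat_of_dual_def dq_scalar_def quat_of_real_def dquat_eq_iff quat_eq_iff)
lemma norm_comm: "dcnj x * x = x * dcnj x"
  by (simp add: dcnj_def qcnj_def times_dquat_def times_quat_def plus_quat_def dquat_eq_iff quat_eq_iff algebra_simps)

lemma dquat_of_dual_mult: "dquat_of_dual (a * b) = dquat_of_dual a * dquat_of_dual b"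
  by (simp add: dquat_of_dual_def quat_of_real_def times_dual_def times_dquat_def times_quat_def plus_quat_def dquat_eq_iff quat_eq_iff)
lemma dquat_of_dual_add: "dquat_of_dual (a + b) = dquat_of_dual a + dquat_of_dual b"
  by (simp add: dquat_of_dual_def quat_of_real_def plus_dual_def plus_dquat_def plus_quat_def)
lemma dquat_of_dual_0[simp]: "dquat_of_dual 0 = 0"
  by (simp add: dquat_eq_iff quat_eq_iff dquat_of_dual_def quat_of_real_def zero_dual_def zero_dquat_def)
lemma dquat_of_dual_1[simp]: "dquat_of_dual 1 = 1"
  by (simp add: dquat_eq_iff quat_eq_iff dquat_of_dual_def quat_of_real_def one_dual_def one_dquat_def)
lemma dquat_of_dual_sum: "dquat_of_dual (sum f A) = (\<Sum>a\<in>A. dquat_of_dual (f a))"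
  by (induction A rule: infinite_finite_induct) (auto simp: dquat_of_dual_add)
lemma primal_dquat_of_dual: "primal (dquat_of_dual z) = quat_of_real (dre z)"
  by (simp add: dquat_of_dual_def)

lemma quat_of_real_commute: "quat_of_real a * y = y * quat_of_real a"
  by (simp add: quat_of_real_def times_quat_def)

lemma sq4: "(a::real)^2 + b^2 + c^2 + d^2 = 0 \<Longrightarrow> a = 0 \<and> b = 0 \<and> c = 0 \<and> d = 0"
  by (smt (verit) zero_le_power2 power_eq_0_iff)
definition qn :: "quat \<Rightarrow> real" where "qn a = qre a ^ 2 + qi a ^ 2 + qj a ^ 2 + qk a ^ 2"
definition qinv :: "quat \<Rightarrow> quat" where
  "qinv a = quat_of_real (1 / qn a) * qcnj a"
lemma qn_nz: "a \<noteq> 0 \<Longrightarrow> qn a \<noteq> 0"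
proof
  assume "a \<noteq> 0" "qn a = 0"
  then have "qre a = 0 \<and> qi a = 0 \<and> qj a = 0 \<and> qk a = 0" unfolding qn_def by (intro sq4) simp
  then have "a = 0" by (simp add: quat_eq_iff[of a 0])
  with \<open>a \<noteq> 0\<close> show False by simp
qed
lemma cnj_mult_self: "qcnj a * a = quat_of_real (qn a)"
  by (simp add: qn_def qcnj_def quat_of_real_def times_quat_def power2_eq_square)
lemma mult_cnj_self: "a * qcnj a = quat_of_real (qn a)"
  by (simp add: qn_def qcnj_def quat_of_real_def times_quat_def power2_eq_square)
lemma qor_mult: "quat_of_real x * quat_of_real y = quat_of_real (x * y)"
  by (simp add: quat_of_real_def times_quat_def)
lemma qor_1: "quat_of_real 1 = 1" by (simp add: quat_of_real_def one_quat_def)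
lemma quat_norm_zero: "a * qcnj a = 0 \<Longrightarrow> a = 0"
proof -
  assume h: "a * qcnj a = 0"
  have "qn a = 0" using h unfolding mult_cnj_self quat_of_real_def zero_quat_def by simp
  then show ?thesis using qn_nz by blast
qed
lemma qinv_left: "a \<noteq> 0 \<Longrightarrow> qinv a * a = 1"
  by (simp add: qinv_def mult.assoc cnj_mult_self qor_mult qn_nz qor_1)
lemma qinv_right: "a \<noteq> 0 \<Longrightarrow> a * qinv a = 1"
proof -
  assume h: "a \<noteq> 0"
  have "a * qinv a = (a * quat_of_real (1 / qn a)) * qcnj a" by (simp add: qinv_def mult.assoc)
  also have "\<dots> = quat_of_real (1 / qn a) * (a * qcnj a)"
    by (simp only: quat_of_real_commute[of _ a] mult.assoc[symmetric])
  also have "\<dots> = 1" using h by (simp add: mult_cnj_self qor_mult qn_nz qor_1)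
  finally show ?thesis .
qed

definition dinv :: "dquat \<Rightarrow> dquat" where
  "dinv x = DQ (qinv (primal x)) (- (qinv (primal x) * dualpart x * qinv (primal x)))"

lemma dinv_left: "primal x \<noteq> 0 \<Longrightarrow> dinv x * x = 1"
  by (simp add: dinv_def times_dquat_def one_dquat_def qinv_left qinv_right mult.assoc)
lemma dinv_right: "primal x \<noteq> 0 \<Longrightarrow> x * dinv x = 1"
proof -
  assume h: "primal x \<noteq> 0"
  have "primal x * (qinv (primal x) * dualpart x * qinv (primal x)) = dualpart x * qinv (primal x)"
    using h by (simp add: mult.assoc[symmetric] qinv_right)
  then show ?thesis using h by (simp add: dinv_def times_dquat_def one_dquat_def qinv_right)
qed



lemma coeff_pmul:
  "coeff (pmul p q) k = (\<Sum>i\<le>k. coeff p i * coeff q (k - i))"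
proof -
  have "coeff (pmul p q) k = (\<Sum>i\<le>degree p. \<Sum>j\<le>degree q. if i + j = k then coeff p i * coeff q j else 0)"
    by (simp add: pmul_def coeff_sum coeff_monom)
  also have "\<dots> = (\<Sum>i\<le>degree p. if i \<le> k then coeff p i * coeff q (k - i) else 0)"
  proof (rule sum.cong[OF refl])
    fix i assume "i \<in> {..degree p}"
    have "(\<Sum>j\<le>degree q. if i + j = k then coeff p i * coeff q j else 0)
        = (\<Sum>j\<le>degree q. if j = k - i then (if i \<le> k then coeff p i * coeff q j else 0) else 0)"
      by (rule sum.cong) auto
    also have "\<dots> = (if k - i \<le> degree q then (if i \<le> k then coeff p i * coeff q (k-i) else 0) else 0)"
      by (simp only: sum.delta finite_atMost atMost_iff)
    also have "\<dots> = (if i \<le> k then coeff p i * coeff q (k - i) else 0)"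
      by (auto simp: coeff_eq_0)
    finally show "(\<Sum>j\<le>degree q. if i + j = k then coeff p i * coeff q j else 0) = \<dots>" .
  qed
  also have "\<dots> = (\<Sum>i\<le>degree p + k. if i \<le> k then coeff p i * coeff q (k - i) else 0)"
    by (rule sum.mono_neutral_left) (auto simp: coeff_eq_0)
  also have "\<dots> = (\<Sum>i\<le>k. if i \<le> k then coeff p i * coeff q (k - i) else 0)"
    by (rule sum.mono_neutral_right) auto
  finally show ?thesis by simp
qed

lemma sum_rev_atMost: "(\<Sum>i\<le>(k::nat). f i) = (\<Sum>i\<le>k. f (k - i))"
  by (rule sum.reindex_bij_witness[where i="\<lambda>i. k - i" and j="\<lambda>i. k - i"]) auto

definition fp :: "'a::zero poly \<Rightarrow> 'a fps" where "fp p = Abs_fps (coeff p)"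

lemma fp_nth[simp]: "fps_nth (fp p) n = coeff p n" by (simp add: fp_def)

lemma fp_inj: "fp p = fp q \<Longrightarrow> p = q"
  by (simp add: fps_eq_iff poly_eq_iff)

lemma fp_pmul: "fp (pmul p q) = fp p * fp q"
  by (simp add: fps_eq_iff fps_mult_nth coeff_pmul atLeast0AtMost)

lemma fp_add: "fp (p + q) = fp p + fp q" by (simp add: fps_eq_iff)
lemma fp_diff: "fp (p - (q::'a::ab_group_add poly)) = fp p - fp q" by (simp add: fps_eq_iff)
lemma fp_minus: "fp (- (q::'a::ab_group_add poly)) = - fp q" by (simp add: fps_eq_iff)

lemma pmul_assoc: "pmul (pmul a b) c = pmul a (pmul b (c::'a::ring_1 poly))"
  by (rule fp_inj) (simp add: fp_pmul mult.assoc)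
lemma pmul_add_left: "pmul (a + b) c = pmul a c + pmul b (c::'a::ring_1 poly)"
  by (rule fp_inj) (simp add: fp_pmul fp_add distrib_right)
lemma pmul_add_right: "pmul c (a + b) = pmul c a + pmul c (b::'a::ring_1 poly)"
  by (rule fp_inj) (simp add: fp_pmul fp_add distrib_left)
lemma pmul_diff_left: "pmul (a - b) c = pmul a c - pmul b (c::'a::ring_1 poly)"
  by (rule fp_inj) (simp add: fp_pmul fp_diff left_diff_distrib)
lemma pmul_diff_right: "pmul c (a - b) = pmul c a - pmul c (b::'a::ring_1 poly)"
  by (rule fp_inj) (simp add: fp_pmul fp_diff right_diff_distrib)

lemma degree_pmul_le: "degree (pmul p q) \<le> degree p + degree q"
proof (rule degree_le, intro allI impI)
  fix k assume k: "degree p + degree q < k"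
  show "coeff (pmul p q) k = 0"
    unfolding coeff_pmul
  proof (rule sum.neutral, intro ballI)
    fix i assume "i \<in> {..k}"
    show "coeff p i * coeff q (k - i) = 0"
      using k by (cases "i \<le> degree p") (auto simp: coeff_eq_0)
  qed
qed

lemma coeff_pmul_top: "coeff (pmul p q) (degree p + degree q) = lead_coeff p * lead_coeff q"
proof -
  let ?k = "degree p + degree q"
  have "coeff (pmul p q) ?k = (\<Sum>i\<in>{degree p}. coeff p i * coeff q (?k - i))"
    unfolding coeff_pmul
  proof (rule sum.mono_neutral_right)
    show "\<forall>i\<in>{..?k} - {degree p}. coeff p i * coeff q (?k - i) = 0"
    proof
      fix i assume "i \<in> {..?k} - {degree p}"
      then show "coeff p i * coeff q (?k - i) = 0"
        by (cases "i < degree p") (auto simp: coeff_eq_0)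
    qed
  qed auto
  then show ?thesis by simp
qed

lemma degree_pmul_monic_right:
  assumes "lead_coeff q = 1" "p \<noteq> 0"
  shows "degree (pmul p q) = degree p + degree (q::'a::ring_1 poly)"
proof (rule antisym[OF degree_pmul_le])
  have "coeff (pmul p q) (degree p + degree q) \<noteq> 0"
    using assms by (simp add: coeff_pmul_top)
  then show "degree p + degree q \<le> degree (pmul p q)" by (rule le_degree)
qed

lemma degree_pmul_monic_left:
  assumes "lead_coeff p = 1" "q \<noteq> 0"
  shows "degree (pmul p q) = degree p + degree (q::'a::ring_1 poly)"
proof (rule antisym[OF degree_pmul_le])
  have "coeff (pmul p q) (degree p + degree q) \<noteq> 0"
    using assms by (simp add: coeff_pmul_top)
  then show "degree p + degree q \<le> degree (pmul p q)" by (rule le_degree)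
qed

lemma coeff_pmul_const_left: "coeff (pmul [:c:] p) k = c * coeff p k"
proof -
  have "coeff (pmul [:c:] p) k = (\<Sum>i\<in>{0}. coeff [:c:] i * coeff p (k - i))"
    unfolding coeff_pmul by (rule sum.mono_neutral_right) (auto simp: coeff_pCons split: nat.splits)
  then show ?thesis by simp
qed

lemma coeff_pmul_const_right: "coeff (pmul p [:c:]) k = coeff p k * c"
proof -
  have "coeff (pmul p [:c:]) k = (\<Sum>i\<in>{k}. coeff p i * coeff [:c:] (k - i))"
    unfolding coeff_pmul by (rule sum.mono_neutral_right) (auto simp: coeff_pCons split: nat.splits)
  then show ?thesis by simp
qed

lemma pmul_commute:
  assumes "\<And>i y. coeff A i * y = y * coeff A i"
  shows "pmul A X = pmul X A"
proof (rule poly_eqI)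
  fix k
  have "coeff (pmul A X) k = (\<Sum>i\<le>k. coeff X (k - i) * coeff A i)"
    unfolding coeff_pmul using assms by simp
  also have "\<dots> = (\<Sum>i\<le>k. coeff X (k - (k - i)) * coeff A (k - i))"
    by (rule sum_rev_atMost)
  also have "\<dots> = coeff (pmul X A) k"
    unfolding coeff_pmul by (rule sum.cong) auto
  finally show "coeff (pmul A X) k = coeff (pmul X A) k" .
qed

lemma pmul_linear_linear: "pmul [:a, 1:] [:b, 1:] = [:a * b, a + b, 1:]"
proof (rule poly_eqI)
  fix k
  show "coeff (pmul [:a, 1:] [:b, 1:]) k = coeff [:a * b, a + b, 1:] k"
  proof (cases "k \<le> 2")
    case True
    then have "k = 0 \<or> k = 1 \<or> k = 2" by auto
    then show ?thesis by (auto simp: coeff_pmul numeral_2_eq_2 atMost_Suc)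
  next
    case False
    have "degree (pmul [:a, 1:] [:b, 1:]) \<le> 2"
      using degree_pmul_le[of "[:a, 1:]" "[:b, 1:]"] by simp
    with False show ?thesis by (auto simp: coeff_eq_0 coeff_pCons split: nat.splits)
  qed
qed


lemma pmul_0_left[simp]: "pmul 0 p = 0" by (rule poly_eqI) (simp add: coeff_pmul)
lemma pmul_0_right[simp]: "pmul p 0 = 0" by (rule poly_eqI) (simp add: coeff_pmul)

lemma pdivmod_monic:
  fixes D :: "'a::ring_1 poly"
  assumes D: "lead_coeff D = 1" "degree D > 0"
  shows "\<exists>Q R. M = pmul Q D + R \<and> degree R < degree D"
proof (induction "degree M" arbitrary: M rule: less_induct)
  case less
  show ?case
  proof (cases "degree M < degree D")
    case True
    then show ?thesis by (intro exI[of _ 0] exI[of _ M]) simp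
  next
    case False
    then have M0: "M \<noteq> 0" using D by auto
    then have lc: "lead_coeff M \<noteq> 0" by simp
    define T where "T = monom (lead_coeff M) (degree M - degree D)"
    have dT: "degree T = degree M - degree D" using lc by (simp add: T_def degree_monom_eq)
    have lT: "lead_coeff T = lead_coeff M" using dT by (simp add: T_def)
    define M1 where "M1 = M - pmul T D"
    have s: "degree T + degree D = degree M" using dT False by simp
    have top: "coeff (pmul T D) (degree M) = lead_coeff M"
      using coeff_pmul_top[of T D] s lT D by simp
    have dle: "degree (pmul T D) \<le> degree M" using degree_pmul_le[of T D] s by simp
    have "degree M1 \<le> degree M - 1"
    proof (rule degree_le, intro allI impI)
      fix i assume i: "degree M - 1 < i"
      show "coeff M1 i = 0"
      proof (cases "i = degree M")
        case True then show ?thesis by (simp add: M1_def top)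
      next
        case False
        with i have "i > degree M" by auto
        then show ?thesis using dle by (simp add: M1_def coeff_eq_0)
      qed
    qed
    then have "degree M1 < degree M" using False D by auto
    then obtain Q R where QR: "M1 = pmul Q D + R" "degree R < degree D" using less by blast
    have "M = pmul (Q + T) D + R" using QR by (simp add: M1_def pmul_add_left algebra_simps)
    with QR(2) show ?thesis by blast
  qed
qed


lemma coeff_pconj: "coeff (pconj p) k = dcnj (coeff p k)"
  by (simp add: pconj_def coeff_map_poly)

lemma pconj_pmul: "pconj (pmul p q) = pmul (pconj q) (pconj p)"
proof (rule poly_eqI)
  fix k
  have "coeff (pconj (pmul p q)) k = (\<Sum>i\<le>k. dcnj (coeff q (k - i)) * dcnj (coeff p i))"
    by (simp add: coeff_pconj coeff_pmul dcnj_sum dcnj_mult)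
  also have "\<dots> = (\<Sum>i\<le>k. dcnj (coeff q (k - (k - i))) * dcnj (coeff p (k - i)))"
    by (rule sum_rev_atMost)
  also have "\<dots> = coeff (pmul (pconj q) (pconj p)) k"
    unfolding coeff_pmul coeff_pconj by (rule sum.cong) auto
  finally show "coeff (pconj (pmul p q)) k = coeff (pmul (pconj q) (pconj p)) k" .
qed

lemma pconj_diff: "pconj (p - q) = pconj p - pconj q"
  by (rule poly_eqI) (simp add: coeff_pconj dcnj_diff)
lemma pconj_pconj: "pconj (pconj p) = p"
  by (rule poly_eqI) (simp add: coeff_pconj)

lemma coeff_map_primal: "coeff (map_poly primal p) k = primal (coeff p k)"
  by (simp add: coeff_map_poly)

lemma map_primal_pmul: "map_poly primal (pmul p q) = pmul (map_poly primal p) (map_poly primal q)"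
  by (rule poly_eqI) (simp add: coeff_map_primal coeff_pmul primal_sum primal_mult)
lemma map_primal_add: "map_poly primal (p + q) = map_poly primal p + map_poly primal q"
  by (rule poly_eqI) (simp add: coeff_map_primal primal_add)

lemma map_dqd_mult: "map_poly dquat_of_dual (A * B) = pmul (map_poly dquat_of_dual A) (map_poly dquat_of_dual B)"
  by (rule poly_eqI) (simp add: coeff_map_poly coeff_mult coeff_pmul dquat_of_dual_sum dquat_of_dual_mult)

lemma ring_aux:
  fixes m mb q qb n c :: "'a::ring_1"
  assumes "m * mb = n * c" "q * n = n * q" "m * n = n * m"
  shows "(m - q * n) * (mb - n * qb) = n * (c - q * mb - m * qb + q * (n * qb))"
proof -
  have "(m - q * n) * (mb - n * qb) = m * mb - (m * n) * qb - (q * n) * mb + (q * n) * (n * qb)"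
    by (simp add: algebra_simps)
  also have "\<dots> = n * c - (n * m) * qb - (n * q) * mb + (n * q) * (n * qb)"
    using assms by simp
  also have "\<dots> = n * (c - q * mb - m * qb + q * (n * qb))"
    by (simp add: algebra_simps)
  finally show ?thesis .
qed



theorem lemma3:
  fixes M :: "dquat poly" and N :: "dual poly"
  assumes "lead_coeff M = 1"
    and "lead_coeff N = 1" and "degree N = 2"
    and "N dvd norm_poly M"
    and "\<not> (\<exists>Q :: quat poly.
            primal_poly M = pmul (map_poly quat_of_real (dual_primal_poly N)) Q)"
  shows "\<exists>!h :: dquat.
           (\<exists>Q :: dquat poly. M = pmul Q [:- h, 1:])
         \<and> pmul [:- h, 1:] [:- dcnj h, 1:] = map_poly dquat_of_dual N"
proof -
  define Nq where "Nq = map_poly dquat_of_dual N"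
  have cNq: "coeff Nq k = dquat_of_dual (coeff N k)" for k
    by (simp add: Nq_def coeff_map_poly)
  have cN2: "coeff N 2 = 1" using assms(2,3) by simp
  have cNq2: "coeff Nq 2 = 1" by (simp add: cNq cN2)
  have cNqbig: "coeff Nq k = 0" if "k > 2" for k
    using that assms(3) by (simp add: cNq coeff_eq_0)
  have dNq: "degree Nq = 2"
  proof (rule antisym)
    show "degree Nq \<le> 2" by (rule degree_le) (simp add: cNqbig)
    show "2 \<le> degree Nq" by (rule le_degree) (simp add: cNq2)
  qed
  have lNq: "lead_coeff Nq = 1" using dNq cNq2 by simp
  define n0 where "n0 = coeff Nq 0"
  define n1 where "n1 = coeff Nq 1"
  have Nq_eq: "Nq = [:n0, n1, 1:]"
  proof (rule poly_eqI)
    fix k show "coeff Nq k = coeff [:n0, n1, 1:] k"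
    proof (cases "k \<le> 2")
      case True
      then have "k = 0 \<or> k = 1 \<or> k = 2" by auto
      then show ?thesis using cNq2 by (auto simp: n0_def n1_def numeral_2_eq_2)
    next
      case False
      then show ?thesis using cNqbig by (auto simp: coeff_pCons split: nat.splits)
    qed
  qed
  have scNq: "dscal (coeff Nq k)" for k by (simp add: cNq dscal_of_dual)
  have Nq_comm: "pmul Nq X = pmul X Nq" for X
    by (rule pmul_commute) (simp add: dscal_commute[OF scNq])
  have pconj_Nq: "pconj Nq = Nq"
    by (rule poly_eqI) (simp add: coeff_pconj dscal_dcnj[OF scNq])
  obtain Q R where QR: "M = pmul Q Nq + R" "degree R < 2"
    using pdivmod_monic[OF lNq, of M] dNq by auto
  define r0 where "r0 = coeff R 0"
  define r1 where "r1 = coeff R 1"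
  have R_eq: "R = [:r0, r1:]"
  proof (rule poly_eqI)
    fix k show "coeff R k = coeff [:r0, r1:] k"
      using QR(2) by (cases k) (auto simp: r0_def r1_def coeff_eq_0 coeff_pCons split: nat.splits)
  qed
  define np where "np = map_poly quat_of_real (dual_primal_poly N)"
  have qor0: "quat_of_real 0 = 0" by (simp add: quat_of_real_def quat_eq_iff)
  have dre0: "dre 0 = 0" by (simp add: zero_dual_def)
  have np_eq: "map_poly primal Nq = np"
    by (rule poly_eqI)
       (simp add: np_def coeff_map_primal cNq primal_dquat_of_dual coeff_map_poly qor0 dre0 dual_primal_poly_def)
  have np_comm: "pmul np X = pmul X np" for X
    by (rule pmul_commute) (simp add: np_def coeff_map_poly qor0 quat_of_real_commute)
  have Pdec: "primal_poly M = pmul np (map_poly primal Q) + map_poly primal R"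
    unfolding primal_poly_def QR(1) map_primal_add map_primal_pmul np_eq np_comm ..
  have Rp: "map_poly primal R \<noteq> 0"
  proof
    assume "map_poly primal R = 0"
    then have "primal_poly M = pmul np (map_poly primal Q)" using Pdec by simp
    then show False using assms(5) unfolding np_def by blast
  qed
  have pr01: "primal r0 \<noteq> 0 \<or> primal r1 \<noteq> 0"
  proof (rule ccontr)
    assume "\<not> (primal r0 \<noteq> 0 \<or> primal r1 \<noteq> 0)"
    then have "map_poly primal R = 0"
      by (intro poly_eqI) (auto simp: coeff_map_primal R_eq coeff_pCons split: nat.splits)
    with Rp show False by simp
  qed
  define MM where "MM = pmul M (pconj M)"
  have MMc: "pconj MM = MM" by (simp add: MM_def pconj_pmul pconj_pconj)
  have dqs0: "dq_scalar 0 = 0" by (simp add: dq_scalar_def zero_dual_def zero_dquat_def)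
  have MM_eq: "MM = map_poly dquat_of_dual (norm_poly M)"
  proof (rule poly_eqI)
    fix k
    have "dcnj (coeff MM k) = coeff MM k" using MMc by (metis coeff_pconj)
    then have "dscal (coeff MM k)" by (rule dcnj_fix_dscal)
    then show "coeff MM k = coeff (map_poly dquat_of_dual (norm_poly M)) k"
      by (simp add: coeff_map_poly norm_poly_def dqs0 dscal_dual_scalar MM_def)
  qed
  obtain C where C: "norm_poly M = N * C" using assms(4) by (elim dvdE)
  define Cq where "Cq = map_poly dquat_of_dual C"
  have MM2: "pmul M (pconj M) = pmul Nq Cq"
    using MM_eq unfolding MM_def C map_dqd_mult Nq_def Cq_def .
  define S where "S = Cq - pmul Q (pconj M) - pmul M (pconj Q) + pmul Q (pmul Nq (pconj Q))"
  have Rd: "R = M - pmul Q Nq" using QR(1) by simp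
  have Rc: "pconj R = pconj M - pmul Nq (pconj Q)"
    by (simp add: Rd pconj_diff pconj_pmul pconj_Nq)
  have RR: "pmul R (pconj R) = pmul Nq S"
  proof (rule fp_inj)
    have a1: "fp M * fp (pconj M) = fp Nq * fp Cq" using MM2 by (metis fp_pmul)
    have a2: "fp Q * fp Nq = fp Nq * fp Q" using Nq_comm[of Q] by (metis fp_pmul)
    have a3: "fp M * fp Nq = fp Nq * fp M" using Nq_comm[of M] by (metis fp_pmul)
    show "fp (pmul R (pconj R)) = fp (pmul Nq S)"
      unfolding Rc S_def unfolding Rd
      by (simp add: fp_pmul fp_diff fp_add ring_aux[OF a1 a2 a3])
  qed
  have dR: "degree R \<le> 1" using QR(2) by simp
  have dRc: "degree (pconj R) \<le> 1"
    by (rule degree_le) (simp add: coeff_pconj R_eq coeff_pCons split: nat.splits)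
  have dRR: "degree (pmul R (pconj R)) \<le> 2"
    using degree_pmul_le[of R "pconj R"] dR dRc by simp
  define s where "s = coeff S 0"
  have S_eq: "S = [:s:]"
  proof (cases "S = 0")
    case True then show ?thesis by (simp add: s_def)
  next
    case False
    then have "degree (pmul Nq S) = 2 + degree S" using degree_pmul_monic_left[OF lNq] dNq by simp
    then have "degree S = 0" using dRR RR by simp
    then show ?thesis unfolding s_def
      by (intro poly_eqI) (auto simp: coeff_eq_0 coeff_pCons split: nat.splits)
  qed
  have cRR: "coeff (pmul R (pconj R)) k = coeff Nq k * s" for k
    unfolding RR S_eq by (rule coeff_pmul_const_right)
  have e2: "r1 * dcnj r1 = s"
    using cRR[of 2] cNq2 by (simp add: coeff_pmul coeff_pconj R_eq numeral_2_eq_2 atMost_Suc)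
  have e1: "r0 * dcnj r1 + r1 * dcnj r0 = n1 * s"
    using cRR[of 1] by (simp add: coeff_pmul coeff_pconj R_eq atMost_Suc n1_def add.commute)
  have e0: "r0 * dcnj r0 = n0 * s"
    using cRR[of 0] by (simp add: coeff_pmul coeff_pconj R_eq n0_def)
  have p1: "primal r1 \<noteq> 0"
  proof
    assume h: "primal r1 = 0"
    then have "primal s = 0" using e2 by (metis primal_mult mult_zero_left)
    then have "primal (r0 * dcnj r0) = 0" using e0 by (simp add: primal_mult)
    then have "primal r0 * qcnj (primal r0) = 0" by (simp add: primal_mult dcnj_def)
    then have "primal r0 = 0" by (rule quat_norm_zero)
    with h pr01 show False by simp
  qed
  define h where "h = - (dinv r1 * r0)"
  have r1h: "r1 * h = - r0"
    by (simp add: h_def mult.assoc[symmetric] dinv_right[OF p1])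
  have r0h: "r0 = - (r1 * h)" using r1h by simp
  define u where "u = dinv r1"
  define v where "v = dcnj (dinv r1)"
  have ru: "r1 * u = 1" using dinv_right[OF p1] by (simp add: u_def)
  have cv: "dcnj r1 * v = 1"
    by (simp add: v_def dcnj_mult[symmetric] dinv_left[OF p1])
  have canc: "x = 0" if "x * s = 0" for x
  proof -
    have "x * s * v * u = x * (r1 * ((dcnj r1 * v) * u))" by (simp add: e2[symmetric] mult.assoc)
    also have "\<dots> = x" by (simp add: cv ru)
    finally show ?thesis using that by simp
  qed
  have hn1: "- (h + dcnj h) = n1"
  proof -
    have tc: "r1 * (h + dcnj h) = (h + dcnj h) * r1" by (rule dscal_commute[OF dscal_trace, symmetric])
    have "r0 * dcnj r1 + r1 * dcnj r0 = - (r1 * (h + dcnj h) * dcnj r1)"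
      by (simp add: r0h dcnj_uminus dcnj_mult algebra_simps)
    also have "\<dots> = (- (h + dcnj h)) * s" by (simp only: tc mult.assoc minus_mult_left e2)
    finally have "(- (h + dcnj h) - n1) * s = 0" using e1 by (simp add: left_diff_distrib)
    then show ?thesis using canc by fastforce
  qed
  have hn0: "h * dcnj h = n0"
  proof -
    have tc: "r1 * (h * dcnj h) = (h * dcnj h) * r1" by (rule dscal_commute[OF dscal_norm, symmetric])
    have "r0 * dcnj r0 = r1 * (h * dcnj h) * dcnj r1"
      by (simp add: r0h dcnj_uminus dcnj_mult mult.assoc)
    also have "\<dots> = (h * dcnj h) * s" by (simp add: tc e2[symmetric] mult.assoc)
    finally have "(h * dcnj h - n0) * s = 0" using e0 by (simp add: left_diff_distrib)
    then show ?thesis using canc by fastforce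
  qed
  have fac: "pmul [:- h, 1:] [:- dcnj h, 1:] = Nq"
    by (simp add: pmul_linear_linear Nq_eq hn0 hn1[symmetric] add.commute)
  have fac2: "pmul [:- dcnj h, 1:] [:- h, 1:] = Nq"
    by (simp add: pmul_linear_linear Nq_eq hn0[symmetric] hn1[symmetric] norm_comm)
  have Rfac: "pmul [:r1:] [:- h, 1:] = R"
    by (rule poly_eqI) (simp add: coeff_pmul_const_left R_eq coeff_pCons r0h split: nat.splits)
  have ex: "M = pmul (pmul Q [:- dcnj h, 1:] + [:r1:]) [:- h, 1:]"
    by (simp add: QR(1) pmul_add_left pmul_assoc fac2 Rfac)
  show ?thesis
  proof (rule ex1I[of _ h])
    show "(\<exists>Q. M = pmul Q [:- h, 1:]) \<and> pmul [:- h, 1:] [:- dcnj h, 1:] = map_poly dquat_of_dual N"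
      using ex fac Nq_def by blast
  next
    fix h' assume A: "(\<exists>Q. M = pmul Q [:- h', 1:]) \<and> pmul [:- h', 1:] [:- dcnj h', 1:] = map_poly dquat_of_dual N"
    then obtain Q2 where Q2: "M = pmul Q2 [:- h', 1:]" by blast
    from A have B: "pmul [:- h', 1:] [:- dcnj h', 1:] = Nq" by (simp add: Nq_def)
    have fac2': "pmul [:- dcnj h', 1:] [:- h', 1:] = Nq"
      using B by (simp add: pmul_linear_linear norm_comm add.commute)
    define W where "W = Q2 - pmul Q [:- dcnj h', 1:]"
    have RW: "R = pmul W [:- h', 1:]"
      by (simp add: Rd W_def Q2 pmul_diff_left pmul_assoc fac2')
    define w where "w = coeff W 0"
    have W_eq: "W = [:w:]"
    proof (cases "W = 0")
      case True then show ?thesis by (simp add: w_def)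
    next
      case False
      then have "degree (pmul W [:- h', 1:]) = degree W + 1"
        using degree_pmul_monic_right[of "[:- h', 1:]" W] by simp
      then have "degree W = 0" using dR RW by simp
      then show ?thesis unfolding w_def
        by (intro poly_eqI) (auto simp: coeff_eq_0 coeff_pCons split: nat.splits)
    qed
    have c1: "r1 = w" using RW W_eq
      by (metis coeff_pmul_const_left r1_def coeff_pCons_Suc coeff_pCons_0 mult.right_neutral One_nat_def)
    have c0: "r0 = w * (- h')" using RW W_eq
      by (metis coeff_pmul_const_left r0_def coeff_pCons_0)
    have "r1 * h' = r1 * h" using c0 c1 r1h by simp
    then have "dinv r1 * (r1 * h') = dinv r1 * (r1 * h)" by simp
    then show "h' = h" by (simp add: mult.assoc[symmetric] dinv_left[OF p1])
  qed
qed

end
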